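(* Let $\ell\ge2$ and $k\ge1$ be integers. Let $\Upsilon_\ell^k$ be the map sending a partition $\nu=(\nu_1,\ldots,\nu_k)$ with $k$ nonzero parts to the partition $(\nu_1-1,\ldots,\nu_k-1)$ (zero parts discarded), i.e. deleting the first column of the diagram. Then $\Upsilon_\ell^k$ is a bijection from $\{\nu:\nu_1\le\ell-1,\ len(\nu)=k\}$ onto $\{\sigma:\sigma_1\le\ell-2,\ len(\sigma)\le k\}$, and for every $\ell$-core $\lambda$ with $len(\lambda)=k$, \[ \rho_{\ell-1}\big(\widetilde{\Phi_\ell^k}(\lambda)\big)=\Upsilon_\ell^k\big(\rho_\ell(\lambda)\big). \]
   Context: Partitions are in English notation; box $(x,y)$ is in row $x$, column $y$; $len(\mu)$ is the number of nonzero parts. The hook length $h^\mu_{(a,c)}$ of a box is the number of boxes of $\mu$ in row $a$ weakly right of it plus the number in column $c$ strictly below it. An $m$-core is a partition none of whose hook lengths is divisible by $m$. Lapointe–Morse map: for $m\ge1$ and an $m$-core $\mu$, $\rho_m(\mu)$ is the partition whose $x$-th part is the number of boxes in row $x$ of $\mu$ having hook length $\le m$ (i.e. left-justify the rows of the skew diagram $\mu/\gamma$, where $\gamma$ consists of the boxes of $\mu$ with hook length $>m$). It is known that $\rho_m$ is a bijection from $m$-cores onto partitions with first part $\le m-1$, preserving the number of nonzero parts. For an $\ell$-core $\lambda$ with $len(\lambda)=k$, $\widetilde{\Phi_\ell^k}(\lambda)$ is obtained from the diagram of $\lambda$ by deleting every column $y$ with $h^\lambda_{(1,y)}\equiv h^\lambda_{(1,1)}\pmod\ell$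 and shifting the remaining columns left; equivalently it is the transpose of $\Phi_\ell^k(\lambda^{tr})$, where for an $\ell$-core $\nu$ with first part $k$, $\Phi_\ell^k(\nu)$ deletes all rows $x$ with $h^\nu_{(x,1)}\equiv h^\nu_{(1,1)}\pmod\ell$. It is known that $\widetilde{\Phi_\ell^k}(\lambda)$ is an $(\ell-1)$-core with at most $k$ nonzero parts. *)

theory Defs
  imports Main
begin

text \<open>A partition is a weakly decreasing list of positive naturals; part x (1-based) is
  the (x-1)-th list entry. The number of nonzero parts len is the list length.\<close>

definition is_partition :: "nat list \<Rightarrow> bool" where
  "is_partition mu \<longleftrightarrow> sorted_wrt (\<ge>) mu \<and> 0 \<notin> set mu"

definition part :: "nat list \<Rightarrow> nat \<Rightarrow> nat" where
  "part mu x = (if 1 \<le> x \<and> x \<le> length mu then mu ! (x - 1) else 0)"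

definition first_part :: "nat list \<Rightarrow> nat" where
  "first_part mu = part mu 1"

definition in_diagram :: "nat list \<Rightarrow> nat \<Rightarrow> nat \<Rightarrow> bool" where
  "in_diagram mu x y \<longleftrightarrow> 1 \<le> x \<and> 1 \<le> y \<and> y \<le> part mu x"

definition col_len :: "nat list \<Rightarrow> nat \<Rightarrow> nat" where
  "col_len mu c = card {x. 1 \<le> x \<and> x \<le> length mu \<and> c \<le> part mu x}"

definition hook :: "nat list \<Rightarrow> nat \<Rightarrow> nat \<Rightarrow> nat" where
  "hook mu a c = (part mu a + 1 - c) + (col_len mu c - a)"

definition is_core :: "nat \<Rightarrow> nat list \<Rightarrow> bool" where
  "is_core m mu \<longleftrightarrow> is_partition mu \<and>
     (\<forall>x y. in_diagram mu x y \<longrightarrow> \<not> m dvd hook mu x y)"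

definition rho :: "nat \<Rightarrow> nat list \<Rightarrow> nat list" where
  "rho m mu = filter (\<lambda>n. 0 < n)
     (map (\<lambda>x. card {y. 1 \<le> y \<and> y \<le> part mu x \<and> hook mu x y \<le> m}) [1..<length mu + 1])"

definition Phi_tilde :: "nat \<Rightarrow> nat list \<Rightarrow> nat list" where
  "Phi_tilde l lam = filter (\<lambda>n. 0 < n)
     (map (\<lambda>x. card {y. 1 \<le> y \<and> y \<le> part lam x \<and>
                         \<not> (hook lam 1 y mod l = hook lam 1 1 mod l)}) [1..<length lam + 1])"

definition Upsilon :: "nat list \<Rightarrow> nat list" where
  "Upsilon nu = filter (\<lambda>n. 0 < n) (map (\<lambda>n. n - 1) nu)"

end

theory Submission
  imports Defs
begin

lemma part_zero: "x = 0 \<or> length lam < x \<Longrightarrow> part lam x = 0"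
  by (auto simp: part_def)

lemma part_nonincr:
  assumes "is_partition lam" "1 \<le> x" "x \<le> x'"
  shows "part lam x' \<le> part lam x"
proof (cases "x' \<le> length lam")
  case True
  have s: "sorted_wrt (\<ge>) lam" using assms(1) by (simp add: is_partition_def)
  have "lam ! (x' - 1) \<le> lam ! (x - 1)"
  proof (cases "x = x'")
    case False
    then have "x - 1 < x' - 1" using assms by simp
    from sorted_wrt_nth_less[OF s this] True assms show ?thesis by simp
  qed simp
  then show ?thesis using True assms by (simp add: part_def)
next
  case False then show ?thesis by (simp add: part_def)
qed

lemma downclosed_eq:
  assumes "finite S" "\<forall>x\<in>S. 1 \<le> x" "\<forall>x\<in>S. \<forall>x'. 1 \<le> x' \<and> x' \<le> x \<longrightarrow> x' \<in> S"
  shows "S = {1..card S}"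
proof (cases "S = {}")
  case False
  define M where "M = Max S"
  have M: "M \<in> S" "\<forall>x\<in>S. x \<le> M" using False assms(1) by (auto simp: M_def)
  have "S = {1..M}"
  proof
    show "S \<subseteq> {1..M}" using M assms(2) by auto
    show "{1..M} \<subseteq> S" using M(1) assms(3) by auto
  qed
  then show ?thesis by simp
qed simp

lemma col_len_iff:
  assumes "is_partition lam" "1 \<le> x" "1 \<le> y"
  shows "x \<le> col_len lam y \<longleftrightarrow> y \<le> part lam x"
proof -
  define S where "S = {x. 1 \<le> x \<and> x \<le> length lam \<and> y \<le> part lam x}"
  have fin: "finite S" unfolding S_def by auto
  have dc: "\<forall>x\<in>S. \<forall>x'. 1 \<le> x' \<and> x' \<le> x \<longrightarrow> x' \<in> S"
    unfolding S_def using part_nonincr[OF assms(1)] by (auto intro: le_trans)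
  obtain m where m: "S = {1..m}" "col_len lam y = m"
    using downclosed_eq[OF fin _ dc] by (auto simp: S_def col_len_def)
  have "x \<le> col_len lam y \<longleftrightarrow> x \<in> S" using assms(2) m by simp
  also have "\<dots> \<longleftrightarrow> y \<le> part lam x"
  proof
    assume "y \<le> part lam x"
    then have "x \<le> length lam" using assms(3) part_zero[of x lam] by (cases "x \<le> length lam") auto
    then show "x \<in> S" using \<open>y \<le> part lam x\<close> assms by (simp add: S_def)
  qed (simp add: S_def)
  finally show ?thesis .
qed

lemma col_len_anti: "y \<le> y' \<Longrightarrow> col_len lam y' \<le> col_len lam y"
  unfolding col_len_def by (rule card_mono) auto

context
  fixes lam :: "nat list"
  assumes P: "is_partition lam"
begin

lemma hook_int:
  assumes "1 \<le> x" "1 \<le> y" "y \<le> part lam x"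
  shows "int (hook lam x y) = int (part lam x) - int y + int (col_len lam y) - int x + 1"
    and "x \<le> col_len lam y"
proof -
  show c: "x \<le> col_len lam y" using col_len_iff[OF P assms(1,2)] assms by simp
  show "int (hook lam x y) = int (part lam x) - int y + int (col_len lam y) - int x + 1"
    using c assms by (simp add: hook_def of_nat_diff)
qed

lemma arm_decr:
  assumes "1 \<le> x" "1 \<le> y" "y < y'" "y' \<le> part lam x"
  shows "hook lam x y' < hook lam x y"
proof -
  have "col_len lam y' \<le> col_len lam y" using assms by (simp add: col_len_anti)
  then show ?thesis using hook_int(1)[OF assms(1) _ assms(4)] hook_int(1)[OF assms(1,2)] assms by simp
qed

lemma leg_decr:
  assumes "1 \<le> x" "x < x'" "1 \<le> y" "y \<le> part lam x'"
  shows "hook lam x' y < hook lam x y"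
proof -
  have "part lam x' \<le> part lam x" using part_nonincr[OF P] assms by simp
  then show ?thesis using hook_int(1)[of x' y] hook_int(1)[of x y] assms by simp
qed

lemma hook_pos: "1 \<le> x \<Longrightarrow> 1 \<le> y \<Longrightarrow> y \<le> part lam x \<Longrightarrow> 1 \<le> hook lam x y"
  by (simp add: hook_def)


lemma interval:
  assumes "1 \<le> x" "1 \<le> y" "y \<le> part lam x" "0 < d" "d < hook lam x y"
  shows "(\<exists>y'. y < y' \<and> y' \<le> part lam x \<and> hook lam x y' = d) \<or>
         (\<exists>x'. x < x' \<and> x' \<le> col_len lam y \<and> hook lam x' y + d = hook lam x y)"
proof -
  define h where "h = hook lam x y"
  define A where "A = (\<lambda>y'. hook lam x y') ` {y<..part lam x}"
  define B where "B = (\<lambda>x'. h - hook lam x' y) ` {x<..col_len lam y}"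
  have legbox: "y \<le> part lam x'" if "x' \<le> col_len lam y" "x < x'" for x'
    using col_len_iff[OF P, of x' y] that assms by simp
  have injA: "inj_on (\<lambda>y'. hook lam x y') {y<..part lam x}"
  proof (rule inj_onI)
    fix a b assume ab: "a \<in> {y<..part lam x}" "b \<in> {y<..part lam x}" "hook lam x a = hook lam x b"
    show "a = b"
    proof (cases a b rule: linorder_cases)
      case less then show ?thesis using arm_decr[OF assms(1), of a b] ab assms by simp
    next
      case greater then show ?thesis using arm_decr[OF assms(1), of b a] ab assms by simp
    qed
  qed
  have injB: "inj_on (\<lambda>x'. h - hook lam x' y) {x<..col_len lam y}"
  proof (rule inj_onI)
    fix a b assume ab: "a \<in> {x<..col_len lam y}" "b \<in> {x<..col_len lam y}" "h - hook lam a y = h - hook lam b y"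
    have la: "hook lam a y < h" using leg_decr[OF assms(1), of a y] ab legbox assms by (simp add: h_def)
    have lb: "hook lam b y < h" using leg_decr[OF assms(1), of b y] ab legbox assms by (simp add: h_def)
    have e: "hook lam a y = hook lam b y" using ab(3) la lb by simp
    show "a = b"
    proof (cases a b rule: linorder_cases)
      case less then show ?thesis using leg_decr[of a b y] ab e legbox assms by simp
    next
      case greater then show ?thesis using leg_decr[of b a y] ab e legbox assms by simp
    qed
  qed
  have cA: "card A = part lam x - y" unfolding A_def using card_image[OF injA] by simp
  have cB: "card B = col_len lam y - x" unfolding B_def using card_image[OF injB] by simp
  have sA: "A \<subseteq> {1..<h}"
  proof
    fix v assume "v \<in> A"
    then obtain y' where y': "y < y'" "y' \<le> part lam x" "v = hook lam x y'" by (auto simp: A_def)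
    then show "v \<in> {1..<h}" using arm_decr[OF assms(1,2) y'(1,2)] hook_pos[OF assms(1), of y'] assms
      by (simp add: h_def)
  qed
  have sB: "B \<subseteq> {1..<h}"
  proof
    fix v assume "v \<in> B"
    then obtain x' where x': "x < x'" "x' \<le> col_len lam y" "v = h - hook lam x' y" by (auto simp: B_def)
    then show "v \<in> {1..<h}" using leg_decr[OF assms(1) x'(1) assms(2) legbox[OF x'(2,1)]]
        hook_pos[of x' y] legbox[OF x'(2,1)] assms by (simp add: h_def)
  qed
  have disj: False if t: "y < y'" "y' \<le> part lam x" "x < x'" "x' \<le> col_len lam y"
     "hook lam x y' + hook lam x' y = h" for y' x'
  proof -
    have yb: "y \<le> part lam x'" using legbox t by simp
    have i1: "int (hook lam x y') = int (part lam x) - int y' + int (col_len lam y') - int x + 1"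
      using hook_int(1)[OF assms(1), of y'] t assms by simp
    have i2: "int (hook lam x' y) = int (part lam x') - int y + int (col_len lam y) - int x' + 1"
      using hook_int(1)[of x' y] yb t assms by simp
    have i3: "int h = int (part lam x) - int y + int (col_len lam y) - int x + 1"
      using hook_int(1)[OF assms(1,2,3)] by (simp add: h_def)
    have e: "int (hook lam x y') + int (hook lam x' y) = int h" using t(5) by linarith
    show False
    proof (cases "y' \<le> part lam x'")
      case True
      then have "x' \<le> col_len lam y'" using col_len_iff[OF P, of x' y'] t assms by simp
      then show False using i1 i2 i3 e True by linarith
    next
      case False
      then have "col_len lam y' < x'" using col_len_iff[OF P, of x' y'] t assms by simp
      then show False using i1 i2 i3 e False by linarith
    qed
  qed
  have dj: "A \<inter> B = {}"
  proof (rule ccontr)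
    assume "A \<inter> B \<noteq> {}"
    then obtain y' x' where t: "y < y'" "y' \<le> part lam x" "x < x'" "x' \<le> col_len lam y"
      "hook lam x y' = h - hook lam x' y" by (auto simp: A_def B_def)
    have "hook lam x' y < h" using leg_decr[OF assms(1) t(3) assms(2) legbox[OF t(4,3)]] by (simp add: h_def)
    then show False using disj[OF t(1-4)] t(5) by simp
  qed
  have "card (A \<union> B) = card A + card B" using dj by (simp add: card_Un_disjoint A_def B_def)
  also have "\<dots> = h - 1" using cA cB assms(3) by (simp add: h_def hook_def)
  finally have "A \<union> B = {1..<h}" using sA sB by (intro card_subset_eq) auto
  moreover have "d \<in> {1..<h}" using assms by (simp add: h_def)
  ultimately have "d \<in> A \<or> d \<in> B" by auto
  then show ?thesis
  proof
    assume "d \<in> A" then show ?thesis by (auto simp: A_def)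
  next
    assume "d \<in> B"
    then obtain x' where x': "x < x'" "x' \<le> col_len lam y" "d = h - hook lam x' y" by (auto simp: B_def)
    have "hook lam x' y < h" using leg_decr[OF assms(1) x'(1) assms(2) legbox[OF x'(2,1)]] by (simp add: h_def)
    then show ?thesis using x' by (auto simp: h_def)
  qed
qed

end


lemma mod_shift:
  fixes a b a' b' c e l :: nat
  assumes "a + c = a' + e" "b + c = b' + e"
  shows "(a mod l = b mod l) \<longleftrightarrow> (a' mod l = b' mod l)"
proof (cases "a \<le> b")
  case True
  then have "a' \<le> b'" "b - a = b' - a'" using assms by auto
  then show ?thesis using True by (metis mod_eq_dvd_iff_nat)
next
  case False
  then have "b' \<le> a'" "a - b = a' - b'" "b \<le> a" using assms by auto
  then show ?thesis by (metis mod_eq_dvd_iff_nat)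
qed

lemma arith_bound:
  fixes h l :: nat
  assumes "2 \<le> l" "l < h"
  shows "(h - 2) div l + 1 + l \<le> h"
proof -
  obtain j' where j: "h = Suc l + j'" using less_imp_Suc_add[OF assms(2)] by auto
  obtain l' where l: "l = 2 + l'" using le_Suc_ex[OF assms(1)] by blast
  have "h - 2 < (h - l) * l" using j l by (simp add: algebra_simps)
  then have "(h - 2) div l < h - l" by (simp add: less_mult_imp_div_less)
  then show ?thesis using assms by simp
qed

definition Dcol :: "nat list \<Rightarrow> nat \<Rightarrow> nat \<Rightarrow> bool" where
  "Dcol lam l y \<longleftrightarrow> hook lam 1 y mod l = hook lam 1 1 mod l"

context
  fixes lam :: "nat list" and l :: nat
  assumes C: "is_core l lam" and L2: "2 \<le> l"
begin

lemma P': "is_partition lam" using C by (simp add: is_core_def)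

lemma core_no: "1 \<le> x \<Longrightarrow> 1 \<le> y \<Longrightarrow> y \<le> part lam x \<Longrightarrow> hook lam x y \<noteq> l"
proof
  assume "1 \<le> x" "1 \<le> y" "y \<le> part lam x" "hook lam x y = l"
  then show False using C unfolding is_core_def in_diagram_def by (metis dvd_refl)
qed

lemma row_rel:
  assumes "1 \<le> x" "1 \<le> y" "y \<le> part lam x"
  shows "hook lam 1 y + (part lam x + 1) = hook lam x y + (part lam 1 + x)"
proof -
  have y1: "y \<le> part lam 1" using part_nonincr[OF P', of 1 x] assms by simp
  have "int (hook lam 1 y) = int (part lam 1) - int y + int (col_len lam y) - 1 + 1"
    using hook_int(1)[OF P', of 1 y] y1 assms by simp
  moreover have "int (hook lam x y) = int (part lam x) - int y + int (col_len lam y) - int x + 1"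
    using hook_int(1)[OF P' assms] .
  ultimately have "int (hook lam 1 y + (part lam x + 1)) = int (hook lam x y + (part lam 1 + x))"
    by simp
  then show ?thesis by linarith
qed

lemma row_cong:
  assumes "1 \<le> x" "1 \<le> a" "a \<le> part lam x" "1 \<le> b" "b \<le> part lam x"
  shows "(hook lam 1 a mod l = hook lam 1 b mod l) \<longleftrightarrow> (hook lam x a mod l = hook lam x b mod l)"
  using mod_shift[OF row_rel[OF assms(1-3)] row_rel[OF assms(1,4,5)]] .

lemma row_D:
  assumes "1 \<le> x" "1 \<le> a" "a \<le> part lam x" "1 \<le> b" "b \<le> part lam x" "Dcol lam l a"
  shows "Dcol lam l b \<longleftrightarrow> (hook lam x a mod l = hook lam x b mod l)"
  using row_cong[OF assms(1-5)] assms(6) by (auto simp: Dcol_def)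

lemma unique_D:
  assumes "1 \<le> x" "x \<le> length lam"
  shows "card {y. 1 \<le> y \<and> y \<le> part lam x \<and> Dcol lam l y \<and> hook lam x y \<le> l} = 1"
proof -
  define T where "T = {y. 1 \<le> y \<and> y \<le> part lam x \<and> Dcol lam l y \<and> hook lam x y \<le> l}"
  define Ds where "Ds = {y. 1 \<le> y \<and> y \<le> part lam x \<and> Dcol lam l y}"
  have "lam ! (x - 1) \<in> set lam" using assms by simp
  then have "lam ! (x - 1) \<noteq> 0" using P' unfolding is_partition_def by metis
  then have px: "1 \<le> part lam x" using assms by (simp add: part_def)
  have fin: "finite Ds" by (rule finite_subset[of _ "{..part lam x}"]) (auto simp: Ds_def)
  have "1 \<in> Ds" using px by (simp add: Ds_def Dcol_def)
  then have ne: "Ds \<noteq> {}" by auto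
  define y0 where "y0 = Max Ds"
  have y0: "y0 \<in> Ds" "\<forall>y\<in>Ds. y \<le> y0" using Max_in[OF fin ne] Max_ge[OF fin] by (auto simp: y0_def)
  have y0b: "1 \<le> y0" "y0 \<le> part lam x" "Dcol lam l y0" using y0 by (auto simp: Ds_def)
  have ex: "y0 \<in> T"
  proof (rule ccontr)
    assume "y0 \<notin> T"
    then have gt: "l < hook lam x y0" using y0b by (auto simp: T_def)
    define d where "d = hook lam x y0 - l"
    have d: "0 < d" "d < hook lam x y0" using gt L2 by (auto simp: d_def)
    from interval[OF P' assms(1) y0b(1,2) d] show False
    proof
      assume "\<exists>y'. y0 < y' \<and> y' \<le> part lam x \<and> hook lam x y' = d"
      then obtain y' where y': "y0 < y'" "y' \<le> part lam x" "hook lam x y' = d" by blast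
      have "hook lam x y0 mod l = hook lam x y' mod l" using y'(3) gt by (simp add: d_def le_mod_geq)
      then have "Dcol lam l y'" using row_D[OF assms(1) y0b(1,2) _ y'(2) y0b(3)] y' y0b by simp
      then have "y' \<in> Ds" using y' y0b by (simp add: Ds_def)
      then show False using y0(2) y'(1) by auto
    next
      assume "\<exists>x'. x < x' \<and> x' \<le> col_len lam y0 \<and> hook lam x' y0 + d = hook lam x y0"
      then obtain x' where x': "x < x'" "x' \<le> col_len lam y0" "hook lam x' y0 + d = hook lam x y0" by blast
      have "y0 \<le> part lam x'" using col_len_iff[OF P', of x' y0] x' assms y0b by simp
      moreover have "hook lam x' y0 = l" using x'(3) gt by (simp add: d_def)
      ultimately show False using core_no[of x' y0] x' assms y0b by simp
    qed
  qed
  have un: "y = y0" if "y \<in> T" for y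
  proof (rule ccontr)
    assume ne: "y \<noteq> y0"
    have yb: "1 \<le> y" "y \<le> part lam x" "Dcol lam l y" "hook lam x y \<le> l" using that by (auto simp: T_def)
    have y0h: "hook lam x y0 \<le> l" using ex by (simp add: T_def)
    have cg: "hook lam x y mod l = hook lam x y0 mod l"
      using row_D[OF assms(1) yb(1,2) y0b(1,2) yb(3)] y0b(3) by simp
    have nl1: "hook lam x y \<noteq> l" "hook lam x y0 \<noteq> l" using core_no[OF assms(1) yb(1,2)] core_no[OF assms(1) y0b(1,2)] by auto
    have pos: "1 \<le> hook lam x y" "1 \<le> hook lam x y0" using hook_pos[OF P' assms(1) yb(1,2)] hook_pos[OF P' assms(1) y0b(1,2)] by auto
    show False
    proof (cases "y < y0")
      case True
      then have lt: "hook lam x y0 < hook lam x y" using arm_decr[OF P' assms(1) yb(1) True y0b(2)] by simp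
      then have "l dvd hook lam x y - hook lam x y0" using cg by (simp add: mod_eq_dvd_iff_nat)
      then have "l \<le> hook lam x y - hook lam x y0" using lt by (simp add: dvd_imp_le)
      then show False using yb(4) nl1 pos by linarith
    next
      case False
      then have True': "y0 < y" using ne by simp
      then have lt: "hook lam x y < hook lam x y0" using arm_decr[OF P' assms(1) y0b(1) True' yb(2)] by simp
      then have "l dvd hook lam x y0 - hook lam x y" using mod_eq_dvd_iff_nat[of "hook lam x y" "hook lam x y0" l] cg by simp
      then have "l \<le> hook lam x y0 - hook lam x y" using lt by (simp add: dvd_imp_le)
      then show False using y0h nl1 pos by linarith
    qed
  qed
  have "T = {y0}" using ex un by blast
  then show ?thesis by (simp add: T_def)
qed

lemma D_bound:
  assumes "1 \<le> x" "1 \<le> y" "y \<le> part lam x" "l < hook lam x y"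
  shows "card {y'. y < y' \<and> y' \<le> part lam x \<and> Dcol lam l y'} + l \<le> hook lam x y"
proof -
  define h where "h = hook lam x y"
  define S where "S = {y'. y < y' \<and> y' \<le> part lam x \<and> Dcol lam l y'}"
  define V where "V = hook lam x ` S"
  have inj: "inj_on (hook lam x) S"
  proof (rule inj_onI)
    fix a b assume ab: "a \<in> S" "b \<in> S" "hook lam x a = hook lam x b"
    show "a = b"
    proof (cases a b rule: linorder_cases)
      case less then show ?thesis using arm_decr[OF P' assms(1), of a b] ab assms by (simp add: S_def)
    next
      case greater then show ?thesis using arm_decr[OF P' assms(1), of b a] ab assms by (simp add: S_def)
    qed
  qed
  have cS: "card S = card V" unfolding V_def using card_image[OF inj] by simp
  have Vb: "1 \<le> v \<and> v < h" if vV: "v \<in> V" for v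
  proof -
    obtain y' where "y' \<in> S" "v = hook lam x y'" using vV unfolding V_def by blast
    then have y': "y < y'" "y' \<le> part lam x" "v = hook lam x y'" unfolding S_def by auto
    have "hook lam x y' < hook lam x y" using arm_decr[OF P' assms(1,2) y'(1,2)] .
    moreover have "1 \<le> hook lam x y'" using hook_pos[OF P' assms(1), of y'] assms y' by simp
    ultimately show ?thesis using y'(3) by (simp add: h_def)
  qed
  have Vc: "v mod l = w mod l" if vV: "v \<in> V" "w \<in> V" for v w
  proof -
    obtain a where "a \<in> S" "v = hook lam x a" using vV unfolding V_def by blast
    then have a: "y < a" "a \<le> part lam x" "Dcol lam l a" "v = hook lam x a" unfolding S_def by auto
    obtain b where "b \<in> S" "w = hook lam x b" using vV unfolding V_def by blast
    then have b: "y < b" "b \<le> part lam x" "Dcol lam l b" "w = hook lam x b" unfolding S_def by auto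
    have "1 \<le> a" "1 \<le> b" using a(1) b(1) assms(2) by auto
    then show ?thesis using row_D[OF assms(1) _ a(2) _ b(2) a(3)] a b by simp
  qed
  define g where "g v = (v - 1) div l" for v
  have injg: "inj_on g V"
  proof (rule inj_onI)
    fix v w assume vw: "v \<in> V" "w \<in> V" "g v = g w"
    have "(v - 1) mod l = (w - 1) mod l"
      using mod_shift[of "v - 1" 1 v 0 "w - 1" w] Vc[OF vw(1,2)] Vb[OF vw(1)] Vb[OF vw(2)] by simp
    then have "v - 1 = w - 1" using vw(3) unfolding g_def by (metis div_mult_mod_eq)
    then show "v = w" using Vb[OF vw(1)] Vb[OF vw(2)] by linarith
  qed
  have "g ` V \<subseteq> {..(h - 2) div l}"
  proof
    fix u assume "u \<in> g ` V"
    then obtain v where v: "v \<in> V" "u = g v" by auto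
    then have "v - 1 \<le> h - 2" using Vb[OF v(1)] by linarith
    then show "u \<in> {..(h - 2) div l}" using v by (simp add: g_def div_le_mono)
  qed
  then have "card (g ` V) \<le> (h - 2) div l + 1" using card_mono[of "{..(h - 2) div l}" "g ` V"] by simp
  then have "card S \<le> (h - 2) div l + 1" using cS card_image[OF injg] by simp
  then show ?thesis using arith_bound[OF L2, of h] assms(4) by (simp add: S_def h_def)
qed

end


lemma filter_sorted_takeWhile:
  "sorted_wrt (\<ge>) (xs::nat list) \<Longrightarrow> filter (\<lambda>n. 0 < n) xs = takeWhile (\<lambda>n. 0 < n) xs"
proof (induction xs)
  case (Cons a xs)
  show ?case
  proof (cases "0 < a")
    case True then show ?thesis using Cons by simp
  next
    case False
    then have "\<forall>n\<in>set xs. n = 0" using Cons.prems by auto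
    then have "filter (\<lambda>n. 0 < n) xs = []" by (simp add: filter_empty_conv)
    then show ?thesis using False by simp
  qed
qed simp

lemma part_filter_sorted:
  assumes "sorted_wrt (\<ge>) (xs::nat list)" "i < length xs"
  shows "part (filter (\<lambda>n. 0 < n) xs) (Suc i) = xs ! i"
proof -
  define tw where "tw = takeWhile (\<lambda>n. 0 < n) xs"
  have f: "filter (\<lambda>n. 0 < n) xs = tw" using filter_sorted_takeWhile[OF assms(1)] by (simp add: tw_def)
  show ?thesis
  proof (cases "i < length tw")
    case True
    then show ?thesis using f takeWhile_nth[of i "\<lambda>n. 0 < n" xs] by (simp add: part_def tw_def)
  next
    case False
    have lt: "length tw < length xs" using False assms(2) by simp
    then have z: "xs ! length tw = 0" using nth_length_takeWhile[of "\<lambda>n. 0 < n" xs] by (simp add: tw_def)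
    have "xs ! i \<le> xs ! length tw"
    proof (cases "i = length tw")
      case False
      then have "length tw < i" using \<open>\<not> i < length tw\<close> by simp
      then show ?thesis using sorted_wrt_nth_less[OF assms(1) _ assms(2)] by simp
    qed simp
    then show ?thesis using z False f by (simp add: part_def)
  qed
qed

lemma filter_minus:
  "filter (\<lambda>n. 0 < n) (map (\<lambda>n. n - 1) (filter (\<lambda>n. 0 < n) (xs::nat list))) =
   filter (\<lambda>n. 0 < n) (map (\<lambda>n. n - 1) xs)"
  by (induction xs) auto

definition fN :: "nat list \<Rightarrow> nat \<Rightarrow> nat \<Rightarrow> nat" where
  "fN lam l n = card {y. 1 \<le> y \<and> y \<le> n \<and> \<not> (hook lam 1 y mod l = hook lam 1 1 mod l)}"

lemma fN_alt: "fN lam l n = card {y. 1 \<le> y \<and> y \<le> n \<and> \<not> Dcol lam l y}"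
  by (simp add: fN_def Dcol_def)

lemma fN_mono: "n \<le> n' \<Longrightarrow> fN lam l n \<le> fN lam l n'"
  unfolding fN_alt by (rule card_mono) auto

lemma fN_strict:
  assumes "\<not> Dcol lam l y" "1 \<le> y" "n < y"
  shows "fN lam l n < fN lam l y"
proof -
  let ?A = "{y'. 1 \<le> y' \<and> y' \<le> n \<and> \<not> Dcol lam l y'}"
  let ?B = "{y'. 1 \<le> y' \<and> y' \<le> y \<and> \<not> Dcol lam l y'}"
  have "?A \<subseteq> ?B" using assms by auto
  moreover have "y \<in> ?B" "y \<notin> ?A" using assms by auto
  ultimately have "?A \<subset> ?B" by blast
  moreover have "finite ?B" by (rule finite_subset[of _ "{..y}"]) auto
  ultimately show ?thesis unfolding fN_alt by (simp add: psubset_card_mono)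
qed

lemma fN_le_iff:
  assumes "\<not> Dcol lam l y" "1 \<le> y"
  shows "fN lam l y \<le> fN lam l n \<longleftrightarrow> y \<le> n"
  using fN_mono[of y n lam l] fN_strict[OF assms, of n] by (cases "y \<le> n") auto

lemma fN_pos:
  assumes "\<not> Dcol lam l y" "1 \<le> y"
  shows "1 \<le> fN lam l y"
proof -
  have "fN lam l 0 < fN lam l y" using fN_strict[OF assms, of 0] assms by simp
  then show ?thesis by simp
qed

lemma fN_split:
  assumes "y \<le> n"
  shows "fN lam l n = fN lam l y + card {y'. y < y' \<and> y' \<le> n \<and> \<not> Dcol lam l y'}"
proof -
  have "{y'. 1 \<le> y' \<and> y' \<le> n \<and> \<not> Dcol lam l y'} =
        {y'. 1 \<le> y' \<and> y' \<le> y \<and> \<not> Dcol lam l y'} \<union> {y'. y < y' \<and> y' \<le> n \<and> \<not> Dcol lam l y'}"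
    using assms by auto
  moreover have "card (\<dots>) = fN lam l y + card {y'. y < y' \<and> y' \<le> n \<and> \<not> Dcol lam l y'}"
    unfolding fN_alt by (rule card_Un_disjoint) (auto simp: finite_nat_set_iff_bounded_le)
  ultimately show ?thesis by (simp add: fN_alt)
qed

lemma interval_split:
  assumes "y \<le> n"
  shows "n - y = card {y'. y < y' \<and> y' \<le> n \<and> \<not> Dcol lam l y'} + card {y'. y < y' \<and> y' \<le> n \<and> Dcol lam l y'}"
proof -
  have "{y<..n} = {y'. y < y' \<and> y' \<le> n \<and> \<not> Dcol lam l y'} \<union> {y'. y < y' \<and> y' \<le> n \<and> Dcol lam l y'}"
    by auto
  then have "card {y<..n} = card {y'. y < y' \<and> y' \<le> n \<and> \<not> Dcol lam l y'} + card {y'. y < y' \<and> y' \<le> n \<and> Dcol lam l y'}"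
    by (metis (no_types, lifting) card_Un_disjoint disjoint_iff finite_Un finite_greaterThanAtMost mem_Collect_eq)
  then show ?thesis by simp
qed


context
  fixes lam :: "nat list" and l :: nat
  assumes C: "is_core l lam" and L2: "2 \<le> l"
begin

lemma Phi_eq: "Phi_tilde l lam = filter (\<lambda>n. 0 < n) (map (\<lambda>x. fN lam l (part lam x)) [1..<length lam + 1])"
  by (simp add: Phi_tilde_def fN_def)

lemma sorted_F: "sorted_wrt (\<ge>) (map (\<lambda>x. fN lam l (part lam x)) [1..<length lam + 1])"
  unfolding sorted_wrt_map
proof (rule sorted_wrt_mono_rel[OF _ sorted_wrt_upt])
  fix x y assume "x \<in> set [1..<length lam + 1]" "y \<in> set [1..<length lam + 1]" "x < y"
  then have "1 \<le> x" by (simp del: upt_Suc)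
  then show "fN lam l (part lam y) \<le> fN lam l (part lam x)"
    using part_nonincr[OF P'[OF C L2], of x y] \<open>x < y\<close> by (simp add: fN_mono)
qed

lemma M1: "length (Phi_tilde l lam) \<le> length lam"
  unfolding Phi_eq by (metis length_filter_le length_map length_upt diff_add_inverse2)

lemma M2:
  assumes "1 \<le> x" "x \<le> length lam"
  shows "part (Phi_tilde l lam) x = fN lam l (part lam x)"
proof -
  have "part (Phi_tilde l lam) (Suc (x - 1)) = map (\<lambda>x. fN lam l (part lam x)) [1..<length lam + 1] ! (x - 1)"
    unfolding Phi_eq using assms by (intro part_filter_sorted[OF sorted_F]) auto
  then show ?thesis using assms by (simp del: upt_Suc add: nth_upt)
qed

lemma M3: "length lam < x \<Longrightarrow> part (Phi_tilde l lam) x = 0"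
  using M1 by (simp add: part_def)

lemma M4:
  assumes "1 \<le> y" "\<not> Dcol lam l y"
  shows "col_len (Phi_tilde l lam) (fN lam l y) = col_len lam y"
proof -
  let ?mu = "Phi_tilde l lam"
  have fy: "1 \<le> fN lam l y" using fN_pos[OF assms(2,1)] .
  have "{x. 1 \<le> x \<and> x \<le> length ?mu \<and> fN lam l y \<le> part ?mu x} =
        {x. 1 \<le> x \<and> x \<le> length lam \<and> y \<le> part lam x}"
  proof (rule set_eqI, rule iffI)
    fix x assume "x \<in> {x. 1 \<le> x \<and> x \<le> length ?mu \<and> fN lam l y \<le> part ?mu x}"
    then have x: "1 \<le> x" "x \<le> length ?mu" "fN lam l y \<le> part ?mu x" by auto
    have xk: "x \<le> length lam" using x(2) M1 by simp
    then have "fN lam l y \<le> fN lam l (part lam x)" using x M2 by simp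
    then have "y \<le> part lam x" using fN_le_iff[OF assms(2,1)] by simp
    then show "x \<in> {x. 1 \<le> x \<and> x \<le> length lam \<and> y \<le> part lam x}" using x xk by simp
  next
    fix x assume "x \<in> {x. 1 \<le> x \<and> x \<le> length lam \<and> y \<le> part lam x}"
    then have x: "1 \<le> x" "x \<le> length lam" "y \<le> part lam x" by auto
    have "fN lam l y \<le> part ?mu x" using M2[OF x(1,2)] fN_le_iff[OF assms(2,1)] x(3) by simp
    moreover then have "x \<le> length ?mu" using fy by (cases "x \<le> length ?mu") (auto simp: part_def)
    ultimately show "x \<in> {x. 1 \<le> x \<and> x \<le> length ?mu \<and> fN lam l y \<le> part ?mu x}" using x by simp
  qed
  then show ?thesis by (simp add: col_len_def)
qed

lemma M5:
  assumes "1 \<le> x" "x \<le> length lam" "1 \<le> y" "y \<le> part lam x" "\<not> Dcol lam l y"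
  shows "hook (Phi_tilde l lam) x (fN lam l y) + card {y'. y < y' \<and> y' \<le> part lam x \<and> Dcol lam l y'}
         = hook lam x y"
proof -
  have s1: "fN lam l (part lam x) = fN lam l y + card {y'. y < y' \<and> y' \<le> part lam x \<and> \<not> Dcol lam l y'}"
    using fN_split[OF assms(4)] .
  have s2: "part lam x - y = card {y'. y < y' \<and> y' \<le> part lam x \<and> \<not> Dcol lam l y'} + card {y'. y < y' \<and> y' \<le> part lam x \<and> Dcol lam l y'}"
    using interval_split[OF assms(4)] .
  show ?thesis using s1 s2 assms M2[OF assms(1,2)] M4[OF assms(3,5)] by (simp add: hook_def)
qed

lemma row_count:
  assumes "1 \<le> x" "x \<le> length lam"
  shows "card {j. 1 \<le> j \<and> j \<le> part (Phi_tilde l lam) x \<and> hook (Phi_tilde l lam) x j \<le> l - 1}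
       = card {y. 1 \<le> y \<and> y \<le> part lam x \<and> hook lam x y \<le> l} - 1"
proof -
  let ?mu = "Phi_tilde l lam"
  let ?px = "part lam x"
  define A where "A = {y. 1 \<le> y \<and> y \<le> ?px \<and> \<not> Dcol lam l y}"
  have finA: "finite A" unfolding A_def by (rule finite_subset[of _ "{..?px}"]) auto
  have cA: "card A = fN lam l ?px" by (simp add: A_def fN_alt)
  have inj: "inj_on (fN lam l) A"
  proof (rule inj_onI)
    fix a b assume ab: "a \<in> A" "b \<in> A" "fN lam l a = fN lam l b"
    show "a = b"
    proof (cases a b rule: linorder_cases)
      case less then show ?thesis using fN_strict[of lam l b a] ab by (simp add: A_def)
    next
      case greater then show ?thesis using fN_strict[of lam l a b] ab by (simp add: A_def)
    qed
  qed
  have sub: "fN lam l ` A \<subseteq> {1..fN lam l ?px}"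
  proof
    fix j assume "j \<in> fN lam l ` A"
    then obtain y where y: "y \<in> A" "j = fN lam l y" by auto
    then show "j \<in> {1..fN lam l ?px}" using fN_pos[of lam l y] fN_mono[of y ?px lam l] by (simp add: A_def)
  qed
  have img: "fN lam l ` A = {1..fN lam l ?px}"
    by (rule card_subset_eq) (use sub card_image[OF inj] cA in auto)
  have pmu: "part ?mu x = fN lam l ?px" using M2[OF assms] .
  have equiv: "hook ?mu x (fN lam l y) \<le> l - 1 \<longleftrightarrow> hook lam x y \<le> l" if yA: "y \<in> A" for y
  proof -
    have yb: "1 \<le> y" "y \<le> ?px" "\<not> Dcol lam l y" using yA by (auto simp: A_def)
    note e = M5[OF assms yb]
    show ?thesis
    proof
      assume h: "hook lam x y \<le> l"
      have "hook lam x y \<noteq> l" using core_no[OF C L2 assms(1) yb(1,2)] .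
      then show "hook ?mu x (fN lam l y) \<le> l - 1" using h e by linarith
    next
      assume h: "hook ?mu x (fN lam l y) \<le> l - 1"
      show "hook lam x y \<le> l"
      proof (rule ccontr)
        assume "\<not> hook lam x y \<le> l"
        then have "card {y'. y < y' \<and> y' \<le> ?px \<and> Dcol lam l y'} + l \<le> hook lam x y"
          using D_bound[OF C L2 assms(1) yb(1,2)] by simp
        then show False using h e L2 by linarith
      qed
    qed
  qed
  have "{j. 1 \<le> j \<and> j \<le> part ?mu x \<and> hook ?mu x j \<le> l - 1} = fN lam l ` {y\<in>A. hook ?mu x (fN lam l y) \<le> l - 1}"
    using img pmu by auto
  then have "card {j. 1 \<le> j \<and> j \<le> part ?mu x \<and> hook ?mu x j \<le> l - 1} = card {y\<in>A. hook ?mu x (fN lam l y) \<le> l - 1}"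
    using card_image[OF inj_on_subset[OF inj]] by auto
  also have "{y\<in>A. hook ?mu x (fN lam l y) \<le> l - 1} = {y\<in>A. hook lam x y \<le> l}"
    using equiv by auto
  finally have c1: "card {j. 1 \<le> j \<and> j \<le> part ?mu x \<and> hook ?mu x j \<le> l - 1} = card {y\<in>A. hook lam x y \<le> l}" .
  have "{y. 1 \<le> y \<and> y \<le> ?px \<and> hook lam x y \<le> l} =
        {y\<in>A. hook lam x y \<le> l} \<union> {y. 1 \<le> y \<and> y \<le> ?px \<and> Dcol lam l y \<and> hook lam x y \<le> l}"
    by (auto simp: A_def)
  moreover have "card (\<dots>) = card {y\<in>A. hook lam x y \<le> l} + 1"
    using unique_D[OF C L2 assms] finA
    by (subst card_Un_disjoint) (auto simp: A_def intro: finite_subset[of _ "{..?px}"])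
  ultimately show ?thesis using c1 by simp
qed

end


lemma filter_ext:
  assumes "\<forall>x. m < x \<longrightarrow> f x = (0::nat)" "m \<le> n"
  shows "filter (\<lambda>n. 0 < n) (map f [1..<n+1]) = filter (\<lambda>n. 0 < n) (map f [1..<m+1])"
  using assms(2)
proof (induction n rule: dec_induct)
  case (step n)
  have "f (Suc n) = 0" using assms(1) step(1) by simp
  then show ?case using step by simp
qed simp

lemma second_part:
  assumes C: "is_core l lam" and L2: "2 \<le> l"
  shows "rho (l - 1) (Phi_tilde l lam) = Upsilon (rho l lam)"
proof -
  let ?mu = "Phi_tilde l lam"
  define Rm where "Rm x = card {j. 1 \<le> j \<and> j \<le> part ?mu x \<and> hook ?mu x j \<le> l - 1}" for x
  define Rl where "Rl x = card {y. 1 \<le> y \<and> y \<le> part lam x \<and> hook lam x y \<le> l}" for x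
  have z: "\<forall>x. length ?mu < x \<longrightarrow> Rm x = 0" by (simp add: Rm_def part_def)
  have "rho (l - 1) ?mu = filter (\<lambda>n. 0 < n) (map Rm [1..<length ?mu + 1])"
    by (simp add: rho_def Rm_def[abs_def] del: upt_Suc)
  also have "\<dots> = filter (\<lambda>n. 0 < n) (map Rm [1..<length lam + 1])"
    using filter_ext[OF z M1[OF C L2]] by simp
  also have "map Rm [1..<length lam + 1] = map (\<lambda>x. Rl x - 1) [1..<length lam + 1]"
  proof (rule map_cong[OF refl])
    fix x assume "x \<in> set [1..<length lam + 1]"
    then have "1 \<le> x" "x \<le> length lam" by (simp_all del: upt_Suc)
    then show "Rm x = Rl x - 1" unfolding Rm_def Rl_def by (rule row_count[OF C L2])
  qed
  also have "filter (\<lambda>n. 0 < n) (map (\<lambda>x. Rl x - 1) [1..<length lam + 1]) = Upsilon (rho l lam)"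
    unfolding Upsilon_def rho_def filter_minus by (simp add: Rl_def comp_def)
  finally show ?thesis .
qed

lemma first_part_le:
  assumes "sorted_wrt (\<ge>) (s::nat list)"
  shows "first_part s \<le> m \<longleftrightarrow> (\<forall>n\<in>set s. n \<le> m)"
proof (cases s)
  case Nil then show ?thesis by (simp add: first_part_def part_def)
next
  case (Cons a s')
  then show ?thesis using assms by (auto simp: first_part_def part_def)
qed

lemma Upsilon_inv:
  "is_partition nu \<Longrightarrow> map Suc (Upsilon nu) @ replicate (length nu - length (Upsilon nu)) 1 = nu"
proof (induction nu)
  case (Cons a nu)
  have pa0: "is_partition nu" "0 < a" "\<forall>n\<in>set nu. n \<le> a" "0 \<notin> set nu"
    using Cons.prems by (auto simp: is_partition_def)
  then have pa: "is_partition nu" "0 < a" "\<forall>n\<in>set nu. n \<le> a" "\<forall>n\<in>set nu. 0 < n"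
    by (metis gr0I)+
  show ?case
  proof (cases "2 \<le> a")
    case True
    then have "Upsilon (a # nu) = (a - 1) # Upsilon nu" by (simp add: Upsilon_def)
    moreover have "length (Upsilon nu) \<le> length nu" by (simp add: Upsilon_def)
    ultimately show ?thesis using Cons.IH[OF pa(1)] True by (simp add: Suc_diff_le)
  next
    case False
    then have a1: "a = 1" using pa by simp
    then have all1: "\<forall>n\<in>set nu. n = 1" using pa by force
    then have "Upsilon (a # nu) = []" using a1 by (simp add: Upsilon_def filter_empty_conv)
    moreover have "replicate (length nu) 1 = nu" using all1 by (simp add: replicate_length_same)
    ultimately show ?thesis using a1 by simp
  qed
qed (simp add: Upsilon_def)

lemma first_part_bij:
  assumes "2 \<le> l"
  shows "bij_betw Upsilon
           {nu. is_partition nu \<and> first_part nu \<le> l - 1 \<and> length nu = k}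
           {sigma. is_partition sigma \<and> first_part sigma \<le> l - 2 \<and> length sigma \<le> k}"
proof (rule bij_betw_byWitness[where f' = "\<lambda>s. map Suc s @ replicate (k - length s) 1"])
  show "\<forall>a\<in>{nu. is_partition nu \<and> first_part nu \<le> l - 1 \<and> length nu = k}.
          map Suc (Upsilon a) @ replicate (k - length (Upsilon a)) 1 = a"
    using Upsilon_inv by auto
  show "\<forall>a'\<in>{sigma. is_partition sigma \<and> first_part sigma \<le> l - 2 \<and> length sigma \<le> k}.
          Upsilon (map Suc a' @ replicate (k - length a') 1) = a'"
  proof
    fix s assume "s \<in> {sigma. is_partition sigma \<and> first_part sigma \<le> l - 2 \<and> length sigma \<le> k}"
    then have "0 \<notin> set s" by (simp add: is_partition_def)
    then have "filter (\<lambda>n. 0 < n) s = s" by (metis filter_id_conv gr0I)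
    then show "Upsilon (map Suc s @ replicate (k - length s) 1) = s"
      by (simp add: Upsilon_def comp_def)
  qed
  show "Upsilon ` {nu. is_partition nu \<and> first_part nu \<le> l - 1 \<and> length nu = k}
        \<subseteq> {sigma. is_partition sigma \<and> first_part sigma \<le> l - 2 \<and> length sigma \<le> k}"
  proof
    fix s assume "s \<in> Upsilon ` {nu. is_partition nu \<and> first_part nu \<le> l - 1 \<and> length nu = k}"
    then obtain nu where nu: "is_partition nu" "first_part nu \<le> l - 1" "length nu = k" "s = Upsilon nu"
      by auto
    have snu: "sorted_wrt (\<ge>) nu" using nu(1) by (simp add: is_partition_def)
    have "sorted_wrt (\<ge>) (map (\<lambda>n. n - 1) nu)"
      unfolding sorted_wrt_map by (rule sorted_wrt_mono_rel[OF _ snu]) auto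
    then have ss: "sorted_wrt (\<ge>) s" using nu(4) by (simp add: Upsilon_def sorted_wrt_filter)
    have p: "is_partition s" using ss nu(4) by (auto simp: is_partition_def Upsilon_def)
    have "\<forall>n\<in>set nu. n \<le> l - 1" using nu(2) first_part_le[OF snu] by simp
    then have "\<forall>n\<in>set s. n \<le> l - 2" using nu(4) by (auto simp: Upsilon_def)
    then have "first_part s \<le> l - 2" using first_part_le[OF ss] by simp
    moreover have "length s \<le> k" using nu(3,4) length_filter_le[of _ "map (\<lambda>n. n - 1) nu"]
      by (simp add: Upsilon_def del: length_filter_le)
    ultimately show "s \<in> {sigma. is_partition sigma \<and> first_part sigma \<le> l - 2 \<and> length sigma \<le> k}"
      using p by simp
  qed
  show "(\<lambda>s. map Suc s @ replicate (k - length s) 1) `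
          {sigma. is_partition sigma \<and> first_part sigma \<le> l - 2 \<and> length sigma \<le> k}
        \<subseteq> {nu. is_partition nu \<and> first_part nu \<le> l - 1 \<and> length nu = k}"
  proof
    fix nu assume "nu \<in> (\<lambda>s. map Suc s @ replicate (k - length s) 1) `
          {sigma. is_partition sigma \<and> first_part sigma \<le> l - 2 \<and> length sigma \<le> k}"
    then obtain s where s: "is_partition s" "first_part s \<le> l - 2" "length s \<le> k"
      "nu = map Suc s @ replicate (k - length s) 1" by auto
    have ss: "sorted_wrt (\<ge>) s" using s(1) by (simp add: is_partition_def)
    have "sorted_wrt (\<ge>) (map Suc s)" unfolding sorted_wrt_map by (rule sorted_wrt_mono_rel[OF _ ss]) auto
    moreover have "sorted_wrt (\<ge>) (replicate (k - length s) (1::nat))"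
      by (simp add: sorted_wrt_iff_nth_less)
    ultimately have snu: "sorted_wrt (\<ge>) nu" using s(4) by (auto simp: sorted_wrt_append)
    have p: "is_partition nu" using snu s(4) by (auto simp: is_partition_def)
    have "\<forall>n\<in>set s. n \<le> l - 2" using s(2) first_part_le[OF ss] by simp
    then have "\<forall>n\<in>set nu. n \<le> l - 1" using s(4) assms by auto
    then have "first_part nu \<le> l - 1" using first_part_le[OF snu] by simp
    moreover have "length nu = k" using s(3,4) by simp
    ultimately show "nu \<in> {nu. is_partition nu \<and> first_part nu \<le> l - 1 \<and> length nu = k}"
      using p by simp
  qed
qed

theorem mainTheorem10:
  fixes l k :: nat
  assumes "l \<ge> 2" and "k \<ge> 1"
  shows "bij_betw Upsilon
           {nu. is_partition nu \<and> first_part nu \<le> l - 1 \<and> length nu = k}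
           {sigma. is_partition sigma \<and> first_part sigma \<le> l - 2 \<and> length sigma \<le> k}
       \<and> (\<forall>lam. is_core l lam \<and> length lam = k \<longrightarrow>
             rho (l - 1) (Phi_tilde l lam) = Upsilon (rho l lam))"
  using first_part_bij[OF assms(1)] second_part[OF _ assms(1)] by blast

end
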